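(* Let $n\ge2$ and let $h$ be a smooth symmetric two-covariant tensor field on $\mathbb H^n$. Define the symmetric tensor field \[ \psi=\frac{1}{(x^1)^{n+1}}\bigl(h-h^i{}_i\, b\bigr). \] Then $h=(x^1)^{n+1}\bigl(\psi+\tfrac{1}{1-n}\psi^i{}_i\, b\bigr)$ and \[ P(h)=(x^1)^{n+1}\Bigl(\partial_i\partial_j\psi^{ij}+\partial_1\bigl(\tfrac{1}{x^1}\psi^{ii}\bigr)\Bigr), \] where $\psi^{ij}=b^{ik}b^{j\ell}\psi_{k\ell}$ and $\partial_i=\partial_{x^i}$.
   Context: $\mathbb H^n=\{x\in\mathbb R^n:x^1>0\}$ with hyperbolic metric $b=(x^1)^{-2}\sum_i dx^i\otimes dx^i$. Components are taken in the coordinates $x$; indices are raised and lowered with $b$; all repeated indices are summed over $1,\dots,n$ regardless of position (so $\psi^{ii}=\sum_i\psi^{ii}$ and $h^i{}_i=b^{ij}h_{ij}$). $P(h)=D^iD^jh_{ij}-D^iD_ih^j{}_j-\mathrm{Ric}^{ij}h_{ij}$, where $D$ and $\mathrm{Ric}$ are the Levi-Civita connection and Ricci tensor of $b$. *)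

theory Defs
  imports "HOL-Analysis.Analysis"
begin

(* Points of R^n are vectors real^'n with 'n a finite index type, n = CARD('n).
   The distinguished coordinate x^1 is the component x $ c for a fixed index c. *)

type_synonym 'n sfield = "real^'n \<Rightarrow> real"
type_synonym 'n tensor2 = "'n \<Rightarrow> 'n \<Rightarrow> real^'n \<Rightarrow> real"

definition pd :: "'n::finite \<Rightarrow> 'n sfield \<Rightarrow> 'n sfield" where
  "pd i f x = deriv (\<lambda>t. f (x + t *\<^sub>R axis i 1)) 0"

fun iter_pd :: "'n::finite list \<Rightarrow> 'n sfield \<Rightarrow> 'n sfield" where
  "iter_pd [] f = f"
| "iter_pd (i # is) f = pd i (iter_pd is f)"

definition smooth_on :: "(real^'n::finite) set \<Rightarrow> 'n sfield \<Rightarrow> bool" where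
  "smooth_on U f \<longleftrightarrow> open U \<and>
     (\<forall>is. continuous_on U (iter_pd is f) \<and>
        (\<forall>i. \<forall>x\<in>U. (\<lambda>t. iter_pd is f (x + t *\<^sub>R axis i 1)) differentiable (at 0)))"

definition hyp_space :: "'n::finite \<Rightarrow> (real^'n) set" where
  "hyp_space c = {x. x $ c > 0}"

definition hb :: "'n::finite \<Rightarrow> 'n tensor2" where
  "hb c i j x = (if i = j then 1 / (x $ c)^2 else 0)"

definition hbinv :: "'n::finite \<Rightarrow> 'n tensor2" where
  "hbinv c i j x = (if i = j then (x $ c)^2 else 0)"

definition christoffel :: "'n::finite tensor2 \<Rightarrow> 'n tensor2 \<Rightarrow> 'n \<Rightarrow> 'n \<Rightarrow> 'n \<Rightarrow> 'n sfield" where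
  "christoffel g gi k i j x = (1/2) * (\<Sum>l\<in>UNIV. gi k l x *
      (pd i (g j l) x + pd j (g i l) x - pd l (g i j) x))"

definition ricci :: "'n::finite tensor2 \<Rightarrow> 'n tensor2 \<Rightarrow> 'n tensor2" where
  "ricci g gi i j x = (\<Sum>k\<in>UNIV.
      pd k (christoffel g gi k i j) x - pd j (christoffel g gi k i k) x
      + (\<Sum>l\<in>UNIV. christoffel g gi k k l x * christoffel g gi l i j x
                  - christoffel g gi k j l x * christoffel g gi l i k x))"

definition cov1 :: "'n::finite tensor2 \<Rightarrow> 'n tensor2 \<Rightarrow> 'n tensor2 \<Rightarrow> 'n \<Rightarrow> 'n \<Rightarrow> 'n \<Rightarrow> 'n sfield" where
  "cov1 g gi h k i j x = pd k (h i j) x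
     - (\<Sum>l\<in>UNIV. christoffel g gi l k i x * h l j x)
     - (\<Sum>l\<in>UNIV. christoffel g gi l k j x * h i l x)"

definition cov2 :: "'n::finite tensor2 \<Rightarrow> 'n tensor2 \<Rightarrow> 'n tensor2 \<Rightarrow> 'n \<Rightarrow> 'n \<Rightarrow> 'n \<Rightarrow> 'n \<Rightarrow> 'n sfield" where
  "cov2 g gi h m k i j x = pd m (cov1 g gi h k i j) x
     - (\<Sum>l\<in>UNIV. christoffel g gi l m k x * cov1 g gi h l i j x
                 + christoffel g gi l m i x * cov1 g gi h k l j x
                 + christoffel g gi l m j x * cov1 g gi h k i l x)"

definition trace2 :: "'n::finite tensor2 \<Rightarrow> 'n tensor2 \<Rightarrow> 'n sfield" where
  "trace2 gi h x = (\<Sum>i\<in>UNIV. \<Sum>j\<in>UNIV. gi i j x * h i j x)"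

definition raise2 :: "'n::finite tensor2 \<Rightarrow> 'n tensor2 \<Rightarrow> 'n tensor2" where
  "raise2 gi h i j x = (\<Sum>k\<in>UNIV. \<Sum>l\<in>UNIV. gi i k x * gi j l x * h k l x)"

definition laplace :: "'n::finite tensor2 \<Rightarrow> 'n tensor2 \<Rightarrow> 'n sfield \<Rightarrow> 'n sfield" where
  "laplace g gi f x = (\<Sum>l\<in>UNIV. \<Sum>k\<in>UNIV. gi l k x *
      (pd l (pd k f) x - (\<Sum>m\<in>UNIV. christoffel g gi m l k x * pd m f x)))"

definition opP :: "'n::finite tensor2 \<Rightarrow> 'n tensor2 \<Rightarrow> 'n tensor2 \<Rightarrow> 'n sfield" where
  "opP g gi h x =
     (\<Sum>i\<in>UNIV. \<Sum>j\<in>UNIV. \<Sum>a\<in>UNIV. \<Sum>d\<in>UNIV. gi i a x * gi j d x * cov2 g gi h a d i j x)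
     - laplace g gi (trace2 gi h) x
     - (\<Sum>i\<in>UNIV. \<Sum>j\<in>UNIV. raise2 gi (ricci g gi) i j x * h i j x)"

end

theory Submission
  imports Defs
begin


definition dl :: "'n::finite \<Rightarrow> 'n sfield \<Rightarrow> real^'n \<Rightarrow> bool" where
  "dl i f x \<longleftrightarrow> (\<lambda>t. f (x + t *\<^sub>R axis i 1)) differentiable (at 0)"

definition sc :: "'n::finite \<Rightarrow> 'n sfield" where "sc c y = y $ c"
definition isc :: "'n::finite \<Rightarrow> 'n sfield" where "isc c y = 1 / (y $ c)"
definition psc :: "'n::finite \<Rightarrow> real \<Rightarrow> 'n sfield" where "psc c r y = (y $ c) powr r"

lemma dl_D: "dl i f x \<Longrightarrow> ((\<lambda>t. f (x + t *\<^sub>R axis i 1)) has_real_derivative pd i f x) (at 0)"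
  unfolding dl_def pd_def by (simp add: DERIV_deriv_iff_real_differentiable)

lemma D_dl: "((\<lambda>t. f (x + t *\<^sub>R axis i 1)) has_real_derivative D) (at 0) \<Longrightarrow> dl i f x \<and> pd i f x = D"
  unfolding dl_def pd_def using DERIV_imp_deriv real_differentiable_def by blast

lemma d_add: assumes "dl i f x" "dl i g x" shows "dl i (\<lambda>y. f y + g y) x \<and> pd i (\<lambda>y. f y + g y) x = pd i f x + pd i g x"
proof -
  have "((\<lambda>t. f (x + t *\<^sub>R axis i 1) + g (x + t *\<^sub>R axis i 1)) has_real_derivative pd i f x + pd i g x) (at 0)"
    using DERIV_add[OF dl_D[OF assms(1)] dl_D[OF assms(2)]] by simp
  then show ?thesis using D_dl[of "\<lambda>y. f y + g y"] by blast
qed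
lemma pd_add [simp]: "dl i f x \<Longrightarrow> dl i g x \<Longrightarrow> pd i (\<lambda>y. f y + g y) x = pd i f x + pd i g x" using d_add by blast
lemma dl_add [simp]: "dl i f x \<Longrightarrow> dl i g x \<Longrightarrow> dl i (\<lambda>y. f y + g y) x" using d_add by blast
lemma d_diff: assumes "dl i f x" "dl i g x" shows "dl i (\<lambda>y. f y - g y) x \<and> pd i (\<lambda>y. f y - g y) x = pd i f x - pd i g x"
proof -
  have "((\<lambda>t. f (x + t *\<^sub>R axis i 1) - g (x + t *\<^sub>R axis i 1)) has_real_derivative pd i f x - pd i g x) (at 0)"
    using DERIV_diff[OF dl_D[OF assms(1)] dl_D[OF assms(2)]] by simp
  then show ?thesis using D_dl[of "\<lambda>y. f y - g y"] by blast
qed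
lemma pd_diff [simp]: "dl i f x \<Longrightarrow> dl i g x \<Longrightarrow> pd i (\<lambda>y. f y - g y) x = pd i f x - pd i g x" using d_diff by blast
lemma dl_diff [simp]: "dl i f x \<Longrightarrow> dl i g x \<Longrightarrow> dl i (\<lambda>y. f y - g y) x" using d_diff by blast
lemma d_mult: assumes "dl i f x" "dl i g x" shows "dl i (\<lambda>y. f y * g y) x \<and> pd i (\<lambda>y. f y * g y) x = pd i f x * g x + f x * pd i g x"
proof -
  have "((\<lambda>t. f (x + t *\<^sub>R axis i 1) * g (x + t *\<^sub>R axis i 1)) has_real_derivative pd i f x * g x + f x * pd i g x) (at 0)"
    using DERIV_mult[OF dl_D[OF assms(1)] dl_D[OF assms(2)]] by (simp add: mult.commute)
  then show ?thesis using D_dl[of "\<lambda>y. f y * g y"] by blast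
qed
lemma pd_mult [simp]: "dl i f x \<Longrightarrow> dl i g x \<Longrightarrow> pd i (\<lambda>y. f y * g y) x = pd i f x * g x + f x * pd i g x" using d_mult by blast
lemma dl_mult [simp]: "dl i f x \<Longrightarrow> dl i g x \<Longrightarrow> dl i (\<lambda>y. f y * g y) x" using d_mult by blast
lemma d_minus: assumes "dl i f x" shows "dl i (\<lambda>y. - f y) x \<and> pd i (\<lambda>y. - f y) x = - pd i f x"
proof -
  have "((\<lambda>t. - f (x + t *\<^sub>R axis i 1)) has_real_derivative - pd i f x) (at 0)"
    using DERIV_minus[OF dl_D[OF assms(1)]] by simp
  then show ?thesis using D_dl[of "\<lambda>y. - f y"] by blast
qed
lemma pd_minus [simp]: "dl i f x \<Longrightarrow> pd i (\<lambda>y. - f y) x = - pd i f x" using d_minus by blast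
lemma dl_minus [simp]: "dl i f x \<Longrightarrow> dl i (\<lambda>y. - f y) x" using d_minus by blast
lemma d_const: "dl i (\<lambda>y. k) x \<and> pd i (\<lambda>y. k) x = 0"
  using D_dl[of "\<lambda>y. k" x i 0] by simp
lemma pd_const [simp]: "pd i (\<lambda>y. k) x = 0" using d_const by blast
lemma dl_const [simp]: "dl i (\<lambda>y. k) x" using d_const by blast
lemma pd_if [simp]: "pd i (\<lambda>y. if P then f y else g y) x = (if P then pd i f x else pd i g x)"
  by (cases P) auto
lemma dl_if [simp]: "dl i f x \<Longrightarrow> dl i g x \<Longrightarrow> dl i (\<lambda>y. if P then f y else g y) x"
  by (cases P) auto

lemma dsum: "finite S \<Longrightarrow> (\<forall>k\<in>S. dl i (F k) x) \<Longrightarrow> dl i (\<lambda>y. \<Sum>k\<in>S. F k y) x \<and> pd i (\<lambda>y. \<Sum>k\<in>S. F k y) x = (\<Sum>k\<in>S. pd i (F k) x)"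
proof (induction S rule: finite_induct)
  case empty
  then show ?case by simp
next
  case (insert a S)
  have e: "(\<lambda>y. \<Sum>k\<in>insert a S. F k y) = (\<lambda>y. F a y + (\<Sum>k\<in>S. F k y))"
    using insert by simp
  show ?case unfolding e using insert by (simp del: pd_add add: pd_add[where f="F a"])
qed

lemma pd_sum [simp]: fixes F :: "'k::finite \<Rightarrow> 'n::finite sfield" shows "(\<forall>k. dl i (F k) x) \<Longrightarrow> pd i (\<lambda>y. \<Sum>k\<in>UNIV. F k y) x = (\<Sum>k\<in>UNIV. pd i (F k) x)"
  using dsum[of "UNIV::'k set" i F x] by auto
lemma dl_sum [simp]: fixes F :: "'k::finite \<Rightarrow> 'n::finite sfield" shows "(\<forall>k. dl i (F k) x) \<Longrightarrow> dl i (\<lambda>y. \<Sum>k\<in>UNIV. F k y) x"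
  using dsum[of "UNIV::'k set" i F x] by auto

lemma line_c: "(x + t *\<^sub>R axis i 1) $ c = x $ c + t * (if i = c then 1 else 0)"
  by (simp add: axis_def)

lemma comp_c:
  assumes "(g has_real_derivative g') (at (x $ c))"
  shows "dl i (\<lambda>y. g (y $ c)) x \<and> pd i (\<lambda>y. g (y $ c)) x = g' * (if i = c then 1 else 0)"
proof -
  have "((\<lambda>t. x $ c + t * (if i = c then 1 else 0)) has_real_derivative (if i = c then 1 else 0)) (at 0)"
    by (auto intro!: derivative_eq_intros)
  from DERIV_chain2[OF _ this] assms
  have "((\<lambda>t. g (x $ c + t * (if i = c then 1 else 0))) has_real_derivative g' * (if i = c then 1 else 0)) (at 0)"
    by simp
  then show ?thesis using D_dl[of "\<lambda>y. g (y $ c)" x i, unfolded line_c] by blast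
qed

lemma pd_sc [simp]: "pd i (sc c) x = (if i = c then 1 else 0)"
  and dl_sc [simp]: "dl i (sc c) x"
  using comp_c[of "\<lambda>s. s" 1 x c i] unfolding sc_def[abs_def] by auto

lemma pd_isc [simp]: "x $ c \<noteq> 0 \<Longrightarrow> pd i (isc c) x = - (if i = c then 1 else 0) / (x $ c)^2"
  and dl_isc [simp]: "x $ c \<noteq> 0 \<Longrightarrow> dl i (isc c) x"
proof -
  assume a: "x $ c \<noteq> 0"
  have "((\<lambda>s. 1 / s) has_real_derivative - 1 / (x $ c)^2) (at (x $ c))"
    using a by (auto intro!: derivative_eq_intros simp: power2_eq_square)
  from comp_c[OF this, of i] show "pd i (isc c) x = - (if i = c then 1 else 0) / (x $ c)^2"
    "dl i (isc c) x" unfolding isc_def[abs_def] by auto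
qed

lemma pd_psc [simp]: "x $ c > 0 \<Longrightarrow> pd i (psc c r) x = r * psc c (r - 1) x * (if i = c then 1 else 0)"
  and dl_psc [simp]: "x $ c > 0 \<Longrightarrow> dl i (psc c r) x"
proof -
  assume a: "x $ c > 0"
  have "((\<lambda>s. s powr r) has_real_derivative r * (x $ c) powr (r - 1)) (at (x $ c))"
    using a by (auto intro!: derivative_eq_intros)
  from comp_c[OF this, of i] show "pd i (psc c r) x = r * psc c (r - 1) x * (if i = c then 1 else 0)"
    "dl i (psc c r) x" unfolding psc_def[abs_def] by auto
qed

lemma open_hyp: "open (hyp_space c)"
  unfolding hyp_space_def by (intro open_Collect_less continuous_intros)

lemma pd_local:
  assumes "open U" "x \<in> U" "\<And>y. y \<in> U \<Longrightarrow> f y = g y"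
  shows "pd i f x = pd i g x"
proof -
  have o: "open ((\<lambda>t::real. x + t *\<^sub>R axis i 1) -` U)"
    by (intro open_vimage assms continuous_intros)
  have "\<forall>\<^sub>F t in nhds 0. t \<in> (\<lambda>t::real. x + t *\<^sub>R axis i 1) -` U"
    by (rule eventually_nhds_in_open[OF o]) (use assms in simp)
  then have "\<forall>\<^sub>F t in nhds 0. f (x + t *\<^sub>R axis i 1) = g (x + t *\<^sub>R axis i 1)"
    by eventually_elim (use assms in auto)
  then show ?thesis unfolding pd_def by (intro deriv_cong_ev) auto
qed




lemma ifz_mult [simp]: "(if P then a else 0) * (b::real) = (if P then a * b else 0)"
  and mult_ifz [simp]: "(b::real) * (if P then a else 0) = (if P then b * a else 0)"
  by auto

lemma if_conj: "(if A \<and> B then x else y) = (if A then (if B then x else y) else y)" by auto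
lemma sum_if_const: "(\<Sum>l\<in>S. if P then g l else 0) = (if P then sum g S else 0)" by auto
lemma if_0_minus: "(if P then - a else 0) = - (if P then a else (0::real))" by auto

lemma ifz_div: "(if P then a else 0) / (b::real) = (if P then a / b else 0)" by auto
lemmas dsimps = ifz_div sum_divide_distrib[symmetric] ifz_mult mult_ifz if_conj sum_if_const sum.delta sum.delta' sum.distrib sum_subtractf sum_negf
  sum_distrib_left[symmetric] distrib_left distrib_right left_diff_distrib right_diff_distrib

lemma hb_eq: "hb c j l = (\<lambda>y. if j = l then isc c y * isc c y else 0)"
  by (auto simp: hb_def isc_def power2_eq_square)

lemma pd_hb: "y $ c \<noteq> 0 \<Longrightarrow> pd a (hb c j l) y = (if j = l then -2 * (if a = c then 1 else 0) / (y $ c)^3 else 0)"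
  unfolding hb_eq by simp (auto simp: isc_def power3_eq_cube power2_eq_square field_simps)

lemma christ: "y $ c \<noteq> 0 \<Longrightarrow> christoffel (hb c) (hbinv c) k i j y =
   - (1 / y $ c) * ((if k = i \<and> j = c then 1 else 0) + (if k = j \<and> i = c then 1 else 0) - (if i = j \<and> k = c then 1 else 0))"
  unfolding christoffel_def hbinv_def by (auto simp: pd_hb power3_eq_cube power2_eq_square field_simps)

lemma christ_sum: "y $ c \<noteq> 0 \<Longrightarrow> (\<Sum>l\<in>UNIV. christoffel (hb c) (hbinv c) l a b y * F l) =
   - (1 / y $ c) * ((if b = c then F a else 0) + (if a = c then F b else 0) - (if a = b then F c else 0))"
  by (simp add: christ dsimps)

lemma pd_christ: "y $ c > 0 \<Longrightarrow> pd m (christoffel (hb c) (hbinv c) k i j) y =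
   (if m = c then 1 else 0) / (y $ c)^2 * ((if k = i \<and> j = c then 1 else 0) + (if k = j \<and> i = c then 1 else 0) - (if i = j \<and> k = c then 1 else 0))"
proof -
  assume y: "y $ c > 0"
  have "pd m (christoffel (hb c) (hbinv c) k i j) y = pd m (\<lambda>z. - isc c z * ((if k = i \<and> j = c then 1 else 0) + (if k = j \<and> i = c then 1 else 0) - (if i = j \<and> k = c then 1 else 0))) y"
    by (rule pd_local[OF open_hyp[of c]]) (use y in \<open>auto simp: hyp_space_def christ isc_def\<close>)
  also have "\<dots> = (if m = c then 1 else 0) / (y $ c)^2 * ((if k = i \<and> j = c then 1 else 0) + (if k = j \<and> i = c then 1 else 0) - (if i = j \<and> k = c then 1 else 0))"
    using y by (simp del: ifz_mult mult_ifz)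
  finally show ?thesis .
qed

lemma ricci_hyp: fixes c :: "'n::finite" shows "y $ c > 0 \<Longrightarrow> ricci (hb c) (hbinv c) i j y = (if i = j then (1 - real CARD('n)) / (y $ c)^2 else 0)"
  unfolding ricci_def
  by (simp add: pd_christ christ dsimps cong: if_cong) (simp add: field_simps power2_eq_square)




definition cB :: "'n::finite tensor2 \<Rightarrow> 'n \<Rightarrow> 'n \<Rightarrow> 'n \<Rightarrow> 'n \<Rightarrow> 'n sfield" where
  "cB h c k i j y = (if i = c then h k j y else 0) + (if k = c then h i j y else 0) - (if k = i then h c j y else 0)
     + (if j = c then h i k y else 0) + (if k = c then h i j y else 0) - (if k = j then h i c y else 0)"

context
  fixes c :: "'n::finite" and h :: "'n tensor2"
  assumes hs: "\<And>i j. smooth_on (hyp_space c) (h i j)"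
begin

lemma dl_h [simp]: "y \<in> hyp_space c \<Longrightarrow> dl m (h a b) y"
  using hs[of a b] unfolding smooth_on_def dl_def
  by (metis iter_pd.simps(1))

lemma dl_ph [simp]: "y \<in> hyp_space c \<Longrightarrow> dl m (pd k (h a b)) y"
  using hs[of a b] unfolding smooth_on_def dl_def
  by (metis iter_pd.simps)

lemma hyp_pos: "y \<in> hyp_space c \<Longrightarrow> y $ c > 0" by (simp add: hyp_space_def)

lemma cov1_eq: "y \<in> hyp_space c \<Longrightarrow> cov1 (hb c) (hbinv c) h k i j y = pd k (h i j) y + isc c y * cB h c k i j y"
proof -
  assume y: "y \<in> hyp_space c"
  then have c0: "y $ c \<noteq> 0" using hyp_pos by force
  show ?thesis unfolding cov1_def christ_sum[OF c0]
    using c0 by (simp add: cB_def isc_def field_simps)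
qed

lemma pd_cov1: "x \<in> hyp_space c \<Longrightarrow> pd m (cov1 (hb c) (hbinv c) h k i j) x =
   pd m (pd k (h i j)) x + pd m (isc c) x * cB h c k i j x + isc c x * pd m (cB h c k i j) x"
proof -
  assume x: "x \<in> hyp_space c"
  have "pd m (cov1 (hb c) (hbinv c) h k i j) x = pd m (\<lambda>y. pd k (h i j) y + isc c y * cB h c k i j y) x"
    by (rule pd_local[OF open_hyp[of c] x]) (simp add: cov1_eq)
  also have "\<dots> = pd m (pd k (h i j)) x + pd m (isc c) x * cB h c k i j x + isc c x * pd m (cB h c k i j) x"
    using x hyp_pos[OF x] by (simp add: cB_def[abs_def])
  finally show ?thesis .
qed

end



context
  fixes c :: "'n::finite" and h :: "'n tensor2"
  assumes hs: "\<And>i j. smooth_on (hyp_space c) (h i j)"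
begin

lemmas dlh[simp] = dl_h[of c h, OF hs] dl_ph[of c h, OF hs]
lemma S_eq: "x \<in> hyp_space c \<Longrightarrow> (\<And>i j. h i j = h j i) \<Longrightarrow>
  (\<Sum>i\<in>UNIV. \<Sum>j\<in>UNIV. cov2 (hb c) (hbinv c) h i j i j x) =
  (\<Sum>i\<in>UNIV. \<Sum>j\<in>UNIV. pd i (pd j (h i j)) x)
  + (1 / x $ c) * ((6 - 2 * real CARD('n)) * (\<Sum>i\<in>UNIV. pd i (h i c) x) + (\<Sum>j\<in>UNIV. pd c (h j j) x))
  + (1 / (x $ c)^2) * (3 - real CARD('n)) * ((\<Sum>j\<in>UNIV. h j j x) + (2 - real CARD('n)) * h c c x)"
proof -
  assume x: "x \<in> hyp_space c" and sym: "\<And>i j. h i j = h j i"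
  then have c0: "x $ c \<noteq> 0" and cp: "x $ c > 0" using hyp_pos[of c h, OF hs] by force+
  have e: "(\<Sum>i\<in>UNIV. pd i (h c i) x) = (\<Sum>i\<in>UNIV. pd i (h i c) x)"
    by (metis sym)
  show ?thesis
    unfolding cov2_def sum.distrib christ_sum[OF c0] pd_cov1[of c h, OF hs x] cov1_eq[of c h, OF hs x]
    using c0 cp x
    apply (simp add: dsimps cB_def[abs_def] e cong: if_cong)
    apply (simp add: isc_def field_simps power2_eq_square)
    done
qed


lemma tr_eq: "trace2 (hbinv c) h = (\<lambda>y. sc c y * sc c y * (\<Sum>j\<in>UNIV. h j j y))"
  by (rule ext) (simp add: trace2_def hbinv_def sc_def dsimps power2_eq_square cong: if_cong)

lemma pd_tr: "y \<in> hyp_space c \<Longrightarrow> pd k (trace2 (hbinv c) h) y =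
   2 * (if k = c then 1 else 0) * sc c y * (\<Sum>j\<in>UNIV. h j j y) + sc c y * sc c y * (\<Sum>j\<in>UNIV. pd k (h j j) y)"
  unfolding tr_eq by simp

lemma lap_eq: "x \<in> hyp_space c \<Longrightarrow> laplace (hb c) (hbinv c) (trace2 (hbinv c) h) x =
   (x $ c)^4 * (\<Sum>l\<in>UNIV. \<Sum>j\<in>UNIV. pd l (pd l (h j j)) x)
   + (6 - real CARD('n)) * (x $ c)^3 * (\<Sum>j\<in>UNIV. pd c (h j j) x)
   + (6 - 2 * real CARD('n)) * (x $ c)^2 * (\<Sum>j\<in>UNIV. h j j x)"
proof -
  assume x: "x \<in> hyp_space c"
  then have c0: "x $ c \<noteq> 0" and cp: "x $ c > 0" using hyp_pos[of c h, OF hs] by force+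
  have e: "pd l (pd k (trace2 (hbinv c) h)) x = pd l (\<lambda>y. 2 * (if k = c then 1 else 0) * sc c y * (\<Sum>j\<in>UNIV. h j j y) + sc c y * sc c y * (\<Sum>j\<in>UNIV. pd k (h j j) y)) x" for l k
    by (rule pd_local[OF open_hyp x]) (simp add: pd_tr)
  show ?thesis
    unfolding laplace_def christ_sum[OF c0] e pd_tr[OF x]
    using c0 cp x
    apply (simp add: dsimps hbinv_def cong: if_cong)
    apply (simp add: sc_def field_simps power2_eq_square power3_eq_cube power4_eq_xxxx)
    done
qed



end


definition R1v :: "'n::finite \<Rightarrow> 'n tensor2 \<Rightarrow> real^'n \<Rightarrow> real" where
 "R1v c h x = (\<Sum>i\<in>UNIV. \<Sum>j\<in>UNIV. pd i (\<lambda>y. (3 - real CARD('n)) * psc c (3 - real CARD('n) - 1) y * (if j = c then 1 else 0) * (h i j y - (if i = j then (\<Sum>k\<in>UNIV. h k k y) else 0))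
     + psc c (3 - real CARD('n)) y * (pd j (h i j) y - (if i = j then (\<Sum>k\<in>UNIV. pd j (h k k) y) else 0))) x)"
definition R2v :: "'n::finite \<Rightarrow> 'n tensor2 \<Rightarrow> real^'n \<Rightarrow> real" where
 "R2v c h x = pd c (\<lambda>y. isc c y * (\<Sum>i\<in>UNIV. psc c (3 - real CARD('n)) y * (h i i y - (\<Sum>k\<in>UNIV. h k k y)))) x"

context
  fixes c :: "'n::finite" and h :: "'n tensor2"
  assumes hs: "\<And>i j. smooth_on (hyp_space c) (h i j)"
begin
lemmas dlh2[simp] = dl_h[of c h, OF hs] dl_ph[of c h, OF hs]
lemma ric_term: "x \<in> hyp_space c \<Longrightarrow> (\<Sum>i\<in>UNIV. \<Sum>j\<in>UNIV. raise2 (hbinv c) (ricci (hb c) (hbinv c)) i j x * h i j x)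
   = (1 - real CARD('n)) * (x $ c)^2 * (\<Sum>j\<in>UNIV. h j j x)"
proof -
  assume x: "x \<in> hyp_space c"
  then have c0: "x $ c \<noteq> 0" and cp: "x $ c > 0" using hyp_pos[of c h, OF hs] by force+
  show ?thesis unfolding raise2_def ricci_hyp[OF cp]
    using c0 by (simp add: dsimps hbinv_def cong: if_cong) (simp add: field_simps power2_eq_square power4_eq_xxxx)
qed

lemma first_term: "(\<Sum>i\<in>UNIV. \<Sum>j\<in>UNIV. \<Sum>a\<in>UNIV. \<Sum>d\<in>UNIV. hbinv c i a x * hbinv c j d x * cov2 (hb c) (hbinv c) h a d i j x)
  = (x $ c)^4 * (\<Sum>i\<in>UNIV. \<Sum>j\<in>UNIV. cov2 (hb c) (hbinv c) h i j i j x)"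
  by (simp add: dsimps hbinv_def power4_eq_xxxx power2_eq_square cong: if_cong)

lemma rpsi: "y \<in> hyp_space c \<Longrightarrow> (\<And>i j x. psi i j x =
        (h i j x - trace2 (hbinv c) h x * hb c i j x) / (x $ c) ^ (CARD('n) + 1)) \<Longrightarrow>
   raise2 (hbinv c) psi i j y = psc c (3 - real CARD('n)) y * (h i j y - (if i = j then (\<Sum>k\<in>UNIV. h k k y) else 0))"
proof -
  assume y: "y \<in> hyp_space c" and psi: "\<And>i j x. psi i j x =
        (h i j x - trace2 (hbinv c) h x * hb c i j x) / (x $ c) ^ (CARD('n) + 1)"
  then have c0: "y $ c \<noteq> 0" and cp: "y $ c > 0" using hyp_pos[of c h, OF hs] by force+
  have pw: "psc c (3 - real CARD('n)) y = (y $ c)^4 / (y $ c)^(CARD('n) + 1)"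
  proof -
    have "(y $ c) powr (3 - real CARD('n)) = (y $ c) powr (real 4 - real (CARD('n) + 1))" by simp
    also have "\<dots> = (y $ c) powr real 4 / (y $ c) powr real (CARD('n) + 1)" by (rule powr_diff)
    also have "\<dots> = (y $ c)^4 / (y $ c)^(CARD('n) + 1)" using cp by (simp only: powr_realpow)
    finally show ?thesis unfolding psc_def .
  qed
  show ?thesis unfolding raise2_def psi tr_eq[of c h, OF hs] pw
    using c0 by (simp add: dsimps hbinv_def hb_def sc_def cong: if_cong) (simp add: field_simps power2_eq_square power4_eq_xxxx)
qed


lemma pd_rpsi: "y \<in> hyp_space c \<Longrightarrow> (\<And>i j x. psi i j x =
        (h i j x - trace2 (hbinv c) h x * hb c i j x) / (x $ c) ^ (CARD('n) + 1)) \<Longrightarrow>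
   pd j (raise2 (hbinv c) psi i j) y = (3 - real CARD('n)) * psc c (3 - real CARD('n) - 1) y * (if j = c then 1 else 0) * (h i j y - (if i = j then (\<Sum>k\<in>UNIV. h k k y) else 0))
     + psc c (3 - real CARD('n)) y * (pd j (h i j) y - (if i = j then (\<Sum>k\<in>UNIV. pd j (h k k) y) else 0))"
proof -
  assume y: "y \<in> hyp_space c" and psi: "\<And>i j x. psi i j x =
        (h i j x - trace2 (hbinv c) h x * hb c i j x) / (x $ c) ^ (CARD('n) + 1)"
  then have c0: "y $ c \<noteq> 0" and cp: "y $ c > 0" using hyp_pos[of c h, OF hs] by force+
  have "pd j (raise2 (hbinv c) psi i j) y = pd j (\<lambda>z. psc c (3 - real CARD('n)) z * (h i j z - (if i = j then (\<Sum>k\<in>UNIV. h k k z) else 0))) y"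
    by (rule pd_local[OF open_hyp y]) (rule rpsi[OF _ psi])
  also have "\<dots> = (3 - real CARD('n)) * psc c (3 - real CARD('n) - 1) y * (if j = c then 1 else 0) * (h i j y - (if i = j then (\<Sum>k\<in>UNIV. h k k y) else 0))
     + psc c (3 - real CARD('n)) y * (pd j (h i j) y - (if i = j then (\<Sum>k\<in>UNIV. pd j (h k k) y) else 0))"
    using y cp by simp
  finally show ?thesis .
qed


lemma R1: "x \<in> hyp_space c \<Longrightarrow> (\<And>i j x. psi i j x =
        (h i j x - trace2 (hbinv c) h x * hb c i j x) / (x $ c) ^ (CARD('n) + 1)) \<Longrightarrow>
   (\<Sum>i\<in>UNIV. \<Sum>j\<in>UNIV. pd i (pd j (raise2 (hbinv c) psi i j)) x) = R1v c h x"
proof -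
  assume x: "x \<in> hyp_space c" and psi: "\<And>i j x. psi i j x =
        (h i j x - trace2 (hbinv c) h x * hb c i j x) / (x $ c) ^ (CARD('n) + 1)"
  then have c0: "x $ c \<noteq> 0" and cp: "x $ c > 0" using hyp_pos[of c h, OF hs] by force+
  have e: "pd i (pd j (raise2 (hbinv c) psi i j)) x = pd i (\<lambda>y. (3 - real CARD('n)) * psc c (3 - real CARD('n) - 1) y * (if j = c then 1 else 0) * (h i j y - (if i = j then (\<Sum>k\<in>UNIV. h k k y) else 0))
     + psc c (3 - real CARD('n)) y * (pd j (h i j) y - (if i = j then (\<Sum>k\<in>UNIV. pd j (h k k) y) else 0))) x" for i j
    by (rule pd_local[OF open_hyp x]) (rule pd_rpsi[OF _ psi])
  show ?thesis unfolding e using x cp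
    by (simp add: dsimps R1v_def cong: if_cong)
qed

lemma R2: "x \<in> hyp_space c \<Longrightarrow> (\<And>i j x. psi i j x =
        (h i j x - trace2 (hbinv c) h x * hb c i j x) / (x $ c) ^ (CARD('n) + 1)) \<Longrightarrow>
   pd c (\<lambda>y. 1 / (y $ c) * (\<Sum>i\<in>UNIV. raise2 (hbinv c) psi i i y)) x = R2v c h x"
proof -
  assume x: "x \<in> hyp_space c" and psi: "\<And>i j x. psi i j x =
        (h i j x - trace2 (hbinv c) h x * hb c i j x) / (x $ c) ^ (CARD('n) + 1)"
  then have c0: "x $ c \<noteq> 0" and cp: "x $ c > 0" using hyp_pos[of c h, OF hs] by force+
  have e: "pd c (\<lambda>y. 1 / (y $ c) * (\<Sum>i\<in>UNIV. raise2 (hbinv c) psi i i y)) x =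
     pd c (\<lambda>y. isc c y * (\<Sum>i\<in>UNIV. psc c (3 - real CARD('n)) y * (h i i y - (\<Sum>k\<in>UNIV. h k k y)))) x"
    by (rule pd_local[OF open_hyp x]) (simp add: rpsi[OF _ psi] isc_def)
  show ?thesis unfolding e using x cp
    by (simp add: dsimps R2v_def cong: if_cong)
qed


lemma pwk: "x \<in> hyp_space c \<Longrightarrow> psc c (real k - real CARD('n)) x = (x $ c)^(k+1) / (x $ c)^(CARD('n) + 1)"
proof -
  assume x: "x \<in> hyp_space c"
  then have cp: "x $ c > 0" using hyp_pos[of c h, OF hs] by force
  have "(x $ c) powr (real k - real CARD('n)) = (x $ c) powr (real (k+1) - real (CARD('n) + 1))" by simp
  also have "\<dots> = (x $ c) powr real (k+1) / (x $ c) powr real (CARD('n) + 1)" by (rule powr_diff)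
  also have "\<dots> = (x $ c)^(k+1) / (x $ c)^(CARD('n) + 1)" using cp by (simp only: powr_realpow)
  finally show ?thesis unfolding psc_def .
qed

lemma pws: "x \<in> hyp_space c \<Longrightarrow> psc c (3 - real CARD('n)) x = (x $ c)^4 / (x $ c)^(CARD('n) + 1)"
   "x \<in> hyp_space c \<Longrightarrow> psc c (2 - real CARD('n)) x = (x $ c)^3 / (x $ c)^(CARD('n) + 1)"
   "x \<in> hyp_space c \<Longrightarrow> psc c (1 - real CARD('n)) x = (x $ c)^2 / (x $ c)^(CARD('n) + 1)"
  using pwk[of x 3] pwk[of x 2] pwk[of x 1] hyp_pos[of c h, OF hs, of x] by (simp_all add: power2_eq_square)

lemma R1n: "x \<in> hyp_space c \<Longrightarrow> (\<And>i j. h i j = h j i) \<Longrightarrow> R1v c h x = (1 / (x $ c)^(CARD('n) + 1)) *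
   ((x $ c)^4 * ((\<Sum>i\<in>UNIV. \<Sum>j\<in>UNIV. pd i (pd j (h i j)) x) - (\<Sum>l\<in>UNIV. \<Sum>j\<in>UNIV. pd l (pd l (h j j)) x))
    + 2 * (3 - real CARD('n)) * (x $ c)^3 * ((\<Sum>i\<in>UNIV. pd i (h i c) x) - (\<Sum>j\<in>UNIV. pd c (h j j) x))
    + (3 - real CARD('n)) * (2 - real CARD('n)) * (x $ c)^2 * (h c c x - (\<Sum>j\<in>UNIV. h j j x)))"
proof -
  assume x: "x \<in> hyp_space c" and sym: "\<And>i j. h i j = h j i"
  then have c0: "x $ c \<noteq> 0" and cp: "x $ c > 0" using hyp_pos[of c h, OF hs] by force+
  have sy: "(\<Sum>j\<in>UNIV. pd j (h c j) x) = (\<Sum>i\<in>UNIV. pd i (h i c) x)"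
    by (metis sym)
  show ?thesis unfolding R1v_def using x cp c0
    apply (simp add: dsimps cong: if_cong)
    apply (simp add: pws[OF x] sy)
    apply (simp add: field_simps power2_eq_square power3_eq_cube power4_eq_xxxx)
    done
qed

lemma R2n: "x \<in> hyp_space c \<Longrightarrow> R2v c h x = (1 / (x $ c)^(CARD('n) + 1)) * (1 - real CARD('n)) *
   ((x $ c)^3 * (\<Sum>j\<in>UNIV. pd c (h j j) x) + (2 - real CARD('n)) * (x $ c)^2 * (\<Sum>j\<in>UNIV. h j j x))"
proof -
  assume x: "x \<in> hyp_space c"
  then have c0: "x $ c \<noteq> 0" and cp: "x $ c > 0" using hyp_pos[of c h, OF hs] by force+
  show ?thesis unfolding R2v_def using x cp c0
    apply (simp add: dsimps cong: if_cong)
    apply (simp add: pws[OF x] isc_def)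
    apply (simp add: field_simps power2_eq_square power3_eq_cube power4_eq_xxxx)
    done
qed

end

theorem lemma2p2:
  fixes c :: "'n::finite" and h :: "'n tensor2" and psi :: "'n tensor2"
  assumes n2: "CARD('n) \<ge> 2"
    and hsym: "\<And>i j. h i j = h j i"
    and hsmooth: "\<And>i j. smooth_on (hyp_space c) (h i j)"
    and psi_def: "\<And>i j x. psi i j x =
        (h i j x - trace2 (hbinv c) h x * hb c i j x) / (x $ c) ^ (CARD('n) + 1)"
  shows "\<forall>x\<in>hyp_space c.
           (\<forall>i j. h i j x = (x $ c) ^ (CARD('n) + 1) *
              (psi i j x + 1 / (1 - real CARD('n)) * trace2 (hbinv c) psi x * hb c i j x))
         \<and> opP (hb c) (hbinv c) h x = (x $ c) ^ (CARD('n) + 1) *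
              ((\<Sum>i\<in>UNIV. \<Sum>j\<in>UNIV. pd i (pd j (raise2 (hbinv c) psi i j)) x)
               + pd c (\<lambda>y. 1 / (y $ c) * (\<Sum>i\<in>UNIV. raise2 (hbinv c) psi i i y)) x)"
proof
  fix x assume x: "x \<in> hyp_space c"
  then have c0: "x $ c \<noteq> 0" and cp: "x $ c > 0" by (auto simp: hyp_space_def)
  have N: "real CARD('n) \<ge> 2" using n2 by simp
  have Q0: "(x $ c) ^ (CARD('n) + 1) \<noteq> 0" using c0 by simp
  have part1: "h i j x = (x $ c) ^ (CARD('n) + 1) *
              (psi i j x + 1 / (1 - real CARD('n)) * trace2 (hbinv c) psi x * hb c i j x)" for i j
  proof -
    have t: "trace2 (hbinv c) psi x = (x $ c)^2 * (1 - real CARD('n)) * (\<Sum>k\<in>UNIV. h k k x) / (x $ c) ^ (CARD('n) + 1)"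
      unfolding trace2_def psi_def tr_eq[of c h, OF hsmooth]
      using c0 by (simp add: dsimps hbinv_def hb_def sc_def cong: if_cong) (simp add: field_simps power2_eq_square)
    show ?thesis unfolding t psi_def tr_eq[of c h, OF hsmooth]
      using c0 N Q0 by (simp add: hb_def sc_def field_simps power2_eq_square)
  qed
  have "opP (hb c) (hbinv c) h x = (x $ c) ^ (CARD('n) + 1) * (R1v c h x + R2v c h x)"
    unfolding opP_def first_term[of c h, OF hsmooth] lap_eq[of c h, OF hsmooth x] ric_term[of c h, OF hsmooth x] S_eq[of c h, OF hsmooth x hsym]
      R1n[of c h, OF hsmooth x hsym] R2n[of c h, OF hsmooth x]
    using c0 Q0
    by (simp add: field_simps power2_eq_square power3_eq_cube power4_eq_xxxx)
  then show "(\<forall>i j. h i j x = (x $ c) ^ (CARD('n) + 1) *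
              (psi i j x + 1 / (1 - real CARD('n)) * trace2 (hbinv c) psi x * hb c i j x))
         \<and> opP (hb c) (hbinv c) h x = (x $ c) ^ (CARD('n) + 1) *
              ((\<Sum>i\<in>UNIV. \<Sum>j\<in>UNIV. pd i (pd j (raise2 (hbinv c) psi i j)) x)
               + pd c (\<lambda>y. 1 / (y $ c) * (\<Sum>i\<in>UNIV. raise2 (hbinv c) psi i i y)) x)"
    using part1 R1[of c h, OF hsmooth x psi_def] R2[of c h, OF hsmooth x psi_def] by simp
qed


end
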